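(* Let $(X_t)_{t\ge0}$ be the continuous-time random walk on $\mathbb{Z}$ started at $0$ with generator $(Lf)(x)=\frac12\left(f(x+1)-f(x)\right)+\frac12\left(f(x-1)-f(x)\right)$. Then there is a universal constant $c>0$ such that for all $t\ge0$, $\mathrm{Varent}(X_t)\ge c\,\mathcal{V}(t)$, where $\mathcal{V}(t)=t\log^2\!\left(1+\frac1{\sqrt t}\right)$ (and $\mathcal{V}(0)=0$).
   Context: For a discrete random variable $X$ with probability mass function $f$, $\mathrm{Varent}(X):=\mathrm{Var}(\log f(X))$. *)

theory Defs
  imports "HOL-Probability.Probability"
begin

definition varent :: "'a pmf \<Rightarrow> real" where
  "varent p = measure_pmf.variance p (\<lambda>x. ln (pmf p x))"

text \<open>Up-jumps and down-jumps occur according to independent Poisson processes of rate 1/2,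
  so X_t = N_up(t) - N_down(t) with N_up(t), N_down(t) independent Poisson(t/2);
  at t = 0 the walk is at 0.\<close>
definition srw_law :: "real \<Rightarrow> int pmf" where
  "srw_law t = (if t \<le> 0 then return_pmf 0
     else map_pmf (\<lambda>(a, b). int a - int b)
            (pair_pmf (poisson_pmf (t / 2)) (poisson_pmf (t / 2))))"

definition V_rate :: "real \<Rightarrow> real" where
  "V_rate t = (if t = 0 then 0 else t * (ln (1 + 1 / sqrt t))\<^sup>2)"

end

theory Submission
  imports Defs
begin


definition pp :: "real \<Rightarrow> nat \<Rightarrow> real" where
  "pp r n = r ^ n / fact n * exp (- r)"

definition ss :: "real \<Rightarrow> nat \<Rightarrow> real" where
  "ss r k = (\<Sum>j. pp r (j + k) * pp r j)"

lemma pp_nonneg: "r > 0 \<Longrightarrow> pp r n \<ge> 0"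
  by (simp add: pp_def)

lemma pp_pos: "r > 0 \<Longrightarrow> pp r n > 0"
  by (simp add: pp_def)

lemma pp_le1: "r > 0 \<Longrightarrow> pp r n \<le> 1"
proof -
  assume r: "r > 0"
  have "pmf (poisson_pmf r) n \<le> 1" by (rule pmf_le_1)
  thus ?thesis using r by (simp add: pp_def)
qed

lemma pp_Suc: "pp r (Suc n) = pp r n * r / real (Suc n)"
  by (simp add: pp_def field_simps)

lemma pp_sums: "r > 0 \<Longrightarrow> (\<lambda>n. pp r n) sums 1"
proof -
  assume r: "r > 0"
  have "(\<lambda>n. r ^ n /\<^sub>R fact n) sums exp r" by (rule exp_converges)
  moreover have "(\<lambda>n. r ^ n /\<^sub>R fact n) = (\<lambda>n. r ^ n / fact n)" by (rule ext) (simp add: divide_inverse mult.commute)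
  ultimately have "(\<lambda>n. r ^ n / fact n) sums exp r" by simp
  hence "(\<lambda>n. r ^ n / fact n * exp (-r)) sums (exp r * exp (-r))" by (rule sums_mult2)
  thus ?thesis by (simp add: pp_def exp_minus field_simps)
qed

lemma pp_summable: "r > 0 \<Longrightarrow> summable (pp r)"
  using pp_sums sums_summable by blast

lemma ss_summable: "r > 0 \<Longrightarrow> summable (\<lambda>j. pp r (j + k) * pp r j)"
proof (rule summable_comparison_test'[OF pp_summable])
  assume r: "r > 0"
  show "norm (pp r (j + k) * pp r j) \<le> pp r j" for j
    using pp_le1[OF r, of "j+k"] pp_nonneg[OF r, of j] pp_nonneg[OF r, of "j+k"]
    by (simp add: mult_left_le_one_le)
qed simp_all



abbreviation PP :: "real \<Rightarrow> (nat \<times> nat) pmf" where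
  "PP r \<equiv> pair_pmf (poisson_pmf r) (poisson_pmf r)"

lemma srw_pos: "t > 0 \<Longrightarrow> srw_law t = map_pmf (\<lambda>(a, b). int a - int b) (PP (t/2))"
  by (simp add: srw_law_def)

lemma pmf_PP: "r > 0 \<Longrightarrow> pmf (PP r) (a, b) = pp r a * pp r b"
  by (simp add: pmf_pair pp_def)

lemma q_nat:
  assumes t: "t > 0"
  shows "pmf (srw_law t) (int k) = ss (t/2) k"
proof -
  define r where "r = t/2"
  have r: "r > 0" using t by (simp add: r_def)
  have pre: "(\<lambda>(a, b). int a - int b) -` {int k} = range (\<lambda>j. (j + k, j))"
    by (auto simp: image_def)
  have inj: "inj (\<lambda>j::nat. (j + k, j))" by (auto simp: inj_def)
  have "pmf (srw_law t) (int k) = measure (PP r) (range (\<lambda>j. (j + k, j)))"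
    using t by (simp add: srw_pos pmf_map pre r_def)
  also have "\<dots> = infsetsum (\<lambda>j. pmf (PP r) (j + k, j)) UNIV"
    by (simp add: measure_pmf_conv_infsetsum infsetsum_reindex[OF inj] comp_def)
  also have "\<dots> = infsetsum (\<lambda>j. pp r (j + k) * pp r j) UNIV"
    using r by (simp add: pmf_PP)
  also have "\<dots> = ss r k"
    unfolding ss_def
    by (rule infsetsum_nat') (use ss_summable[OF r, of k] pp_nonneg[OF r] in \<open>simp add: abs_summable_on_nat_iff' abs_mult\<close>)
  finally show ?thesis by (simp add: r_def)
qed

lemma q_neg:
  assumes t: "t > 0"
  shows "pmf (srw_law t) (- int k) = ss (t/2) k"
proof -
  define r where "r = t/2"
  have r: "r > 0" using t by (simp add: r_def)
  have pre: "(\<lambda>(a, b). int a - int b) -` {- int k} = range (\<lambda>j. (j, j + k))"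
    by (auto simp: image_def)
  have inj: "inj (\<lambda>j::nat. (j, j + k))" by (auto simp: inj_def)
  have "pmf (srw_law t) (- int k) = measure (PP r) (range (\<lambda>j. (j, j + k)))"
    using t by (simp add: srw_pos pmf_map pre r_def)
  also have "\<dots> = infsetsum (\<lambda>j. pmf (PP r) (j, j + k)) UNIV"
    by (simp add: measure_pmf_conv_infsetsum infsetsum_reindex[OF inj] comp_def)
  also have "\<dots> = infsetsum (\<lambda>j. pp r (j + k) * pp r j) UNIV"
    using r by (simp add: pmf_PP mult.commute)
  also have "\<dots> = ss r k"
    unfolding ss_def
    by (rule infsetsum_nat') (use ss_summable[OF r, of k] pp_nonneg[OF r] in \<open>simp add: abs_summable_on_nat_iff' abs_mult\<close>)
  finally show ?thesis by (simp add: r_def)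
qed

lemma ss_mono_Suc:
  assumes r: "r > 0"
  shows "ss r (Suc k) \<le> ss r k"
proof -
  let ?f = "\<lambda>j. pp r (j + Suc k) * pp r j"
  let ?g = "\<lambda>j. pp r (j + k) * pp r j"
  let ?h = "\<lambda>j. pp r (Suc j + k) * pp r (Suc j)"
  have tm: "?f j \<le> (?g j + ?h j) / 2" for j
  proof -
    define A where "A = pp r (j + k)"
    define B where "B = pp r j"
    define m where "m = real (j + k + 1)"
    define d where "d = real (j + 1)"
    have A: "A > 0" "B > 0" using pp_pos[OF r] by (auto simp: A_def B_def)
    have md: "m \<ge> d" "d \<ge> 1" by (auto simp: m_def d_def)
    have f: "?f j = A * B * r / m"
      by (simp add: A_def B_def m_def pp_Suc)
    have g: "?g j = A * B" by (simp add: A_def B_def)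
    have h: "?h j = A * B * r ^ 2 / (m * d)"
      by (simp add: A_def B_def m_def d_def pp_Suc power2_eq_square)
    have key: "2 * r * d \<le> m * d + r ^ 2"
    proof -
      have "0 \<le> (d - r) ^ 2" by simp
      hence "2 * r * d \<le> d * d + r ^ 2" by (simp add: power2_eq_square algebra_simps)
      also have "d * d \<le> m * d" using md by (intro mult_right_mono) auto
      finally show ?thesis by simp
    qed
    have "r / m \<le> (1 + r ^ 2 / (m * d)) / 2"
      using key md by (simp add: field_simps)
    hence "A * B * (r / m) \<le> A * B * ((1 + r ^ 2 / (m * d)) / 2)"
      using A by (intro mult_left_mono) auto
    thus ?thesis unfolding f g h by (simp add: field_simps)
  qed
  have sg: "summable ?g" using ss_summable[OF r] .
  have sh: "summable ?h" using summable_Suc_iff[THEN iffD2, OF sg] by simp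
  have sf: "summable ?f" using ss_summable[OF r] .
  have "ss r (Suc k) = suminf ?f" by (simp add: ss_def)
  also have "\<dots> \<le> suminf (\<lambda>j. (?g j + ?h j) / 2)"
    using tm sf sg sh by (intro suminf_le) (auto intro!: summable_add summable_divide)
  also have "\<dots> = (suminf ?g + suminf ?h) / 2"
    using sg sh by (subst suminf_divide) (auto intro!: summable_add simp: suminf_add)
  also have "suminf ?h = suminf ?g - ?g 0"
    using suminf_split_head[OF sg] by simp
  also have "?g 0 \<ge> 0" using pp_nonneg[OF r] by simp
  hence "(suminf ?g + (suminf ?g - ?g 0)) / 2 \<le> suminf ?g" by simp
  finally show ?thesis by (simp add: ss_def)
qed



lemma pp_Suc_mult: "real (Suc n) * pp r (Suc n) = r * pp r n"
  by (simp add: pp_Suc)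

lemma ss_rec:
  assumes r: "r > 0"
  shows "real (Suc m) * ss r (Suc m) = r * (ss r m - ss r (Suc (Suc m)))"
proof -
  let ?f = "\<lambda>j. pp r (j + Suc m) * pp r j"
  let ?g = "\<lambda>j. pp r (j + m) * pp r j"
  let ?h = "\<lambda>j. pp r (j + Suc (Suc m)) * pp r j"
  define u where "u j = real j * pp r j * pp r (j + Suc m)" for j
  have fu: "real (Suc m) * ?f j = r * ?g j - u j" for j
  proof -
    have "real (Suc m) * ?f j = real (Suc (j + m)) * pp r (Suc (j + m)) * pp r j - u j"
      by (simp add: u_def algebra_simps)
    also have "\<dots> = r * ?g j - u j" by (subst pp_Suc_mult) simp
    finally show ?thesis .
  qed
  have uS: "u (Suc i) = r * ?h i" for i
  proof -
    have "u (Suc i) = (real (Suc i) * pp r (Suc i)) * pp r (Suc (i + Suc m))"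
      by (simp add: u_def)
    also have "\<dots> = r * ?h i" by (subst pp_Suc_mult) (simp add: algebra_simps)
    finally show ?thesis .
  qed
  have sh: "summable ?h" using ss_summable[OF r] .
  have sg: "summable ?g" using ss_summable[OF r] .
  have suS: "summable (\<lambda>i. u (Suc i))" unfolding uS using sh by (rule summable_mult)
  have su: "summable u" using suS by (subst summable_Suc_iff[symmetric])
  have u0: "u 0 = 0" by (simp add: u_def)
  have sumu: "suminf u = r * ss r (Suc (Suc m))"
  proof -
    have "suminf u = suminf (\<lambda>i. u (Suc i)) + u 0" using suminf_split_head[OF su] by simp
    also have "\<dots> = r * ss r (Suc (Suc m))" unfolding uS u0 using sh by (simp add: suminf_mult ss_def)
    finally show ?thesis .
  qed
  have "real (Suc m) * ss r (Suc m) = suminf (\<lambda>j. real (Suc m) * ?f j)"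
    unfolding ss_def using ss_summable[OF r] by (rule suminf_mult[symmetric])
  also have "\<dots> = suminf (\<lambda>j. r * ?g j - u j)" by (simp only: fu)
  also have "\<dots> = r * suminf ?g - suminf u"
  proof -
    have "suminf (\<lambda>j. r * ?g j - u j) = suminf (\<lambda>j. r * ?g j) - suminf u"
      using sg su by (intro suminf_diff[symmetric] summable_mult) auto
    also have "suminf (\<lambda>j. r * ?g j) = r * suminf ?g" using sg by (rule suminf_mult)
    finally show ?thesis .
  qed
  also have "\<dots> = r * (ss r m - ss r (Suc (Suc m)))" by (simp add: sumu ss_def algebra_simps)
  finally show ?thesis .
qed



lemma ss_pos: "r > 0 \<Longrightarrow> ss r k > 0"
  unfolding ss_def by (rule suminf_pos[OF ss_summable]) (auto intro: mult_pos_pos pp_pos)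

lemma ss_antimono: "r > 0 \<Longrightarrow> k \<le> l \<Longrightarrow> ss r l \<le> ss r k"
proof (induction l)
  case 0 thus ?case by simp
next
  case (Suc l)
  show ?case
  proof (cases "k = Suc l")
    case False
    hence "k \<le> l" using Suc by simp
    thus ?thesis using Suc ss_mono_Suc[of r l] by simp
  qed simp
qed

lemma ss_ratio_up: "r > 0 \<Longrightarrow> ss r k \<le> (1 + real (Suc k) / r) * ss r (Suc k)"
proof -
  assume r: "r > 0"
  have rec: "real (Suc k) * ss r (Suc k) = r * (ss r k - ss r (Suc (Suc k)))" by (rule ss_rec[OF r])
  have "ss r (Suc (Suc k)) \<le> ss r (Suc k)" by (rule ss_mono_Suc[OF r])
  hence a: "r * ss r (Suc (Suc k)) \<le> r * ss r (Suc k)" using r by simp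
  have e: "r * ss r k = r * ss r (Suc (Suc k)) + real (Suc k) * ss r (Suc k)"
    using rec by (simp add: algebra_simps)
  have f: "r * ((1 + real (Suc k) / r) * ss r (Suc k)) = r * ss r (Suc k) + real (Suc k) * ss r (Suc k)"
    using r by (simp add: field_simps)
  have "r * ss r k \<le> r * ((1 + real (Suc k) / r) * ss r (Suc k))"
    using a e f by linarith
  thus ?thesis using r by simp
qed

lemma ss_gap_step: "r > 0 \<Longrightarrow> ss r (Suc (Suc k)) * (1 + real (Suc k) / r) \<le> ss r k"
proof -
  assume r: "r > 0"
  have rec: "real (Suc k) * ss r (Suc k) = r * (ss r k - ss r (Suc (Suc k)))" by (rule ss_rec[OF r])
  have "ss r (Suc (Suc k)) \<le> ss r (Suc k)" by (rule ss_mono_Suc[OF r])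
  hence "real (Suc k) * ss r (Suc (Suc k)) \<le> r * (ss r k - ss r (Suc (Suc k)))"
    unfolding rec[symmetric] by (intro mult_left_mono) auto
  thus ?thesis using r by (simp add: field_simps)
qed

lemma ss_gap: 
  assumes r: "r > 0"
  shows "ss r (m + 2 * i) * (1 + real (Suc m) / r) ^ i \<le> ss r m"
proof (induction i)
  case 0 thus ?case by simp
next
  case (Suc i)
  have st: "ss r (Suc (Suc (m + 2 * i))) * (1 + real (Suc (m + 2 * i)) / r) \<le> ss r (m + 2 * i)"
    by (rule ss_gap_step[OF r])
  have "1 + real (Suc m) / r \<le> 1 + real (Suc (m + 2 * i)) / r"
    using r by (simp add: divide_right_mono)
  hence "ss r (Suc (Suc (m + 2 * i))) * (1 + real (Suc m) / r) \<le> ss r (m + 2 * i)"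
    using st ss_pos[OF r, of "Suc (Suc (m + 2 * i))"] by (smt (verit) mult_left_mono)
  hence "ss r (m + 2 * Suc i) * (1 + real (Suc m) / r) ^ Suc i
      \<le> ss r (m + 2 * i) * (1 + real (Suc m) / r) ^ i"
  proof -
    let ?c = "1 + real (Suc m) / r"
    have c: "?c \<ge> 0" using r by simp
    have "?c ^ i * (ss r (Suc (Suc (m + 2 * i))) * ?c) \<le> ?c ^ i * ss r (m + 2 * i)"
      by (rule mult_left_mono) (use \<open>ss r (Suc (Suc (m + 2 * i))) * ?c \<le> ss r (m + 2 * i)\<close> c in auto)
    thus ?thesis by (simp add: mult_ac)
  qed
  thus ?case using Suc by linarith
qed

lemma ss_lower:
  assumes r: "r > 0"
  shows "ss r k \<ge> ss r 0 * exp (- (real k * real k) / r)"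
proof (induction k)
  case 0 thus ?case by simp
next
  case (Suc k)
  have u: "ss r k \<le> (1 + real (Suc k) / r) * ss r (Suc k)" by (rule ss_ratio_up[OF r])
  have e: "1 + real (Suc k) / r \<le> exp (real (Suc k) / r)" by (rule exp_ge_add_one_self)
  have "ss r k \<le> exp (real (Suc k) / r) * ss r (Suc k)"
    using u e ss_pos[OF r, of "Suc k"] by (smt (verit) mult_right_mono)
  hence "ss r k * exp (- real (Suc k) / r) \<le> exp (real (Suc k) / r) * ss r (Suc k) * exp (- real (Suc k) / r)"
    by (intro mult_right_mono) auto
  also have "\<dots> = ss r (Suc k) * (exp (real (Suc k) / r) * exp (- real (Suc k) / r))" by (simp add: mult_ac)
  also have "exp (real (Suc k) / r) * exp (- real (Suc k) / r) = 1"
    by (subst mult_exp_exp) (simp add: add_divide_distrib[symmetric])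
  also have "ss r (Suc k) * 1 = ss r (Suc k)" by simp
  finally have "ss r k * exp (- real (Suc k) / r) \<le> ss r (Suc k)" .
  moreover have "ss r 0 * exp (- (real (Suc k) * real (Suc k)) / r) \<le> ss r k * exp (- real (Suc k) / r)"
  proof -
    have "exp (- (real (Suc k) * real (Suc k)) / r) \<le> exp (- (real k * real k) / r) * exp (- real (Suc k) / r)"
    proof -
      have "- (real (Suc k) * real (Suc k)) / r \<le> - (real k * real k) / r + - real (Suc k) / r"
        using r by (simp add: field_simps)
      thus ?thesis by (simp add: mult_exp_exp del: minus_divide_left of_nat_Suc)
    qed
    hence "ss r 0 * exp (- (real (Suc k) * real (Suc k)) / r) \<le> ss r 0 * (exp (- (real k * real k) / r) * exp (- real (Suc k) / r))"
      using ss_pos[OF r, of 0] by (intro mult_left_mono) auto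
    also have "\<dots> \<le> ss r k * exp (- real (Suc k) / r)"
      using Suc by (simp add: mult.assoc[symmetric])
    finally show ?thesis .
  qed
  ultimately show ?case by linarith
qed



lemma pp_sums1: "r > 0 \<Longrightarrow> (\<lambda>n. real n * pp r n) sums r"
proof -
  assume r: "r > 0"
  have "(\<lambda>n. r * pp r n) sums (r * 1)" by (rule sums_mult[OF pp_sums[OF r]])
  hence "(\<lambda>n. real (Suc n) * pp r (Suc n)) sums (r + real 0 * pp r 0)"
    by (simp only: pp_Suc_mult) simp
  thus ?thesis by (subst (asm) sums_Suc_iff) simp
qed

lemma pp_sums2: "r > 0 \<Longrightarrow> (\<lambda>n. (real n)\<^sup>2 * pp r n) sums (r\<^sup>2 + r)"
proof -
  assume r: "r > 0"
  have "(\<lambda>n. r * (real n * pp r n + pp r n)) sums (r * (r + 1))"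
    by (rule sums_mult[OF sums_add[OF pp_sums1[OF r] pp_sums[OF r]]])
  moreover have "(\<lambda>n. r * (real n * pp r n + pp r n)) = (\<lambda>n. (real (Suc n))\<^sup>2 * pp r (Suc n))"
  proof
    fix n
    have "(real (Suc n))\<^sup>2 * pp r (Suc n) = real (Suc n) * (real (Suc n) * pp r (Suc n))"
      by (simp add: power2_eq_square)
    also have "\<dots> = r * (real n * pp r n + pp r n)" by (subst pp_Suc_mult) (simp add: algebra_simps)
    finally show "r * (real n * pp r n + pp r n) = (real (Suc n))\<^sup>2 * pp r (Suc n)" by simp
  qed
  ultimately have "(\<lambda>n. (real (Suc n))\<^sup>2 * pp r (Suc n)) sums (r\<^sup>2 + r + (real 0)\<^sup>2 * pp r 0)"
    by (simp add: power2_eq_square algebra_simps)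
  thus ?thesis by (subst (asm) sums_Suc_iff) simp
qed

lemma pp_var: "r > 0 \<Longrightarrow> (\<lambda>n. pp r n * (real n - r)\<^sup>2) sums r"
proof -
  assume r: "r > 0"
  have "(\<lambda>n. ((real n)\<^sup>2 * pp r n - 2 * r * (real n * pp r n)) + r\<^sup>2 * pp r n) sums ((r\<^sup>2 + r - 2 * r * r) + r\<^sup>2 * 1)"
    by (intro sums_add sums_diff sums_mult pp_sums2 pp_sums1 pp_sums r)
  moreover have "(\<lambda>n. ((real n)\<^sup>2 * pp r n - 2 * r * (real n * pp r n)) + r\<^sup>2 * pp r n) = (\<lambda>n. pp r n * (real n - r)\<^sup>2)"
    by (rule ext) (simp add: power2_eq_square algebra_simps)
  ultimately show ?thesis by (simp add: power2_eq_square algebra_simps)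
qed

lemma pois_cheb:
  assumes r: "r > 0" and rho: "\<rho> > 0"
  shows "measure (poisson_pmf r) {a. \<rho> < \<bar>real a - r\<bar>} \<le> r / \<rho>\<^sup>2"
proof -
  let ?g = "\<lambda>n. pp r n * (real n - r)\<^sup>2 / \<rho>\<^sup>2"
  have sg: "?g sums (r / \<rho>\<^sup>2)" by (rule sums_divide[OF pp_var[OF r]])
  have gnn: "?g n \<ge> 0" for n using pp_nonneg[OF r, of n] by simp
  have asg: "Infinite_Set_Sum.abs_summable_on ?g UNIV"
  proof -
    have "(\<lambda>n. norm (?g n)) = ?g" using gnn by (intro ext) (simp only: real_norm_def abs_of_nonneg)
    thus ?thesis unfolding abs_summable_on_nat_iff' using sums_summable[OF sg] by simp
  qed
  have "measure (poisson_pmf r) {a. \<rho> < \<bar>real a - r\<bar>} = infsetsum (pmf (poisson_pmf r)) {a. \<rho> < \<bar>real a - r\<bar>}"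
    by (rule measure_pmf_conv_infsetsum)
  also have "\<dots> \<le> infsetsum ?g UNIV"
  proof (rule infsetsum_mono_neutral_left[OF pmf_abs_summable asg])
    fix x assume x: "x \<in> {a. \<rho> < \<bar>real a - r\<bar>}"
    have "\<rho>\<^sup>2 \<le> (real x - r)\<^sup>2" using x rho
      by (simp add: abs_le_square_iff[symmetric] less_imp_le)
    hence "1 \<le> (real x - r)\<^sup>2 / \<rho>\<^sup>2" using rho by simp
    hence "pp r x * 1 \<le> pp r x * ((real x - r)\<^sup>2 / \<rho>\<^sup>2)"
      using pp_nonneg[OF r, of x] by (intro mult_left_mono) auto
    thus "pmf (poisson_pmf r) x \<le> ?g x" using r by (simp add: pp_def)
  qed (use gnn in auto)
  also have "\<dots> = r / \<rho>\<^sup>2"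
    using infsetsum_nat'[OF asg] sg by (simp add: sums_iff)
  finally show ?thesis .
qed

lemma integrable_pmf_summ:
  fixes f :: "'a \<Rightarrow> real"
  assumes "Infinite_Set_Sum.abs_summable_on (\<lambda>x. pmf p x * f x) UNIV"
  shows "integrable (measure_pmf p) f"
  using assms by (simp add: measure_pmf_eq_density integrable_density abs_summable_on_def)

lemma pois_exp_integrable:
  assumes r: "r > 0"
  shows "integrable (measure_pmf (poisson_pmf r)) (\<lambda>a. exp (real a))"
proof (rule integrable_pmf_summ)
  have r': "exp 1 * r > 0" using r by simp
  have eq: "pmf (poisson_pmf r) n * exp (real n) = pp (exp 1 * r) n * exp (exp 1 * r - r)" for n
  proof -
    have "exp (real n) = exp 1 ^ n" by (simp add: exp_of_nat_mult[symmetric])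
    thus ?thesis using r
      by (simp add: pp_def power_mult_distrib exp_diff exp_minus field_simps)
  qed
  have "summable (\<lambda>n. pp (exp 1 * r) n * exp (exp 1 * r - r))"
    by (rule summable_mult2[OF pp_summable[OF r']])
  thus "Infinite_Set_Sum.abs_summable_on (\<lambda>n. pmf (poisson_pmf r) n * exp (real n)) UNIV"
    unfolding eq abs_summable_on_nat_iff' using pp_nonneg[OF r'] by simp
qed



lemma var_two_sets:
  fixes p :: "'a pmf" and Y :: "'a \<Rightarrow> real"
  assumes int2: "integrable (measure_pmf p) (\<lambda>x. (Y x)\<^sup>2)"
    and A: "\<And>x. x \<in> A \<Longrightarrow> Y x \<ge> \<alpha>" and B: "\<And>x. x \<in> B \<Longrightarrow> Y x \<le> \<beta>"
    and g: "\<beta> + g \<le> \<alpha>" "g \<ge> 0"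
  shows "measure_pmf.variance p Y \<ge> min (measure p A) (measure p B) * (g / 2)\<^sup>2"
proof -
  have int1: "integrable (measure_pmf p) Y"
    by (rule measure_pmf.square_integrable_imp_integrable[OF _ int2]) simp
  define m where "m = measure_pmf.expectation p Y"
  have intD: "integrable (measure_pmf p) (\<lambda>x. (Y x - m)\<^sup>2)"
  proof -
    have "integrable (measure_pmf p) (\<lambda>x. (Y x)\<^sup>2 - 2 * m * Y x + m\<^sup>2)"
      using int2 int1 by (intro Bochner_Integration.integrable_add Bochner_Integration.integrable_diff integrable_mult_right) auto
    moreover have "(\<lambda>x. (Y x)\<^sup>2 - 2 * m * Y x + m\<^sup>2) = (\<lambda>x. (Y x - m)\<^sup>2)"
      by (rule ext) (simp add: power2_eq_square algebra_simps)
    ultimately show ?thesis by simp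
  qed
  have key: "measure p S * (g / 2)\<^sup>2 \<le> measure_pmf.variance p Y"
    if S: "\<And>x. x \<in> S \<Longrightarrow> g / 2 \<le> \<bar>Y x - m\<bar>" for S
  proof -
    have "(\<integral>x. (g / 2)\<^sup>2 * indicator S x \<partial>measure_pmf p) \<le> (\<integral>x. (Y x - m)\<^sup>2 \<partial>measure_pmf p)"
    proof (rule integral_mono[OF _ intD])
      show "integrable (measure_pmf p) (\<lambda>x. (g / 2)\<^sup>2 * indicator S x)"
        by (intro integrable_mult_right measure_pmf.integrable_const_bound[where B=1]) (auto simp: indicator_def)
      fix x
      show "(g / 2)\<^sup>2 * indicator S x \<le> (Y x - m)\<^sup>2"
      proof (cases "x \<in> S")
        case True
        hence "g / 2 \<le> \<bar>Y x - m\<bar>" by (rule S)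
        hence "(g / 2)\<^sup>2 \<le> \<bar>Y x - m\<bar>\<^sup>2" using g by (intro power_mono) auto
        thus ?thesis using True by simp
      qed simp
    qed
    thus ?thesis by (simp add: m_def mult.commute)
  qed
  show ?thesis
  proof (cases "m \<le> (\<alpha> + \<beta>) / 2")
    case True
    have "measure p A * (g / 2)\<^sup>2 \<le> measure_pmf.variance p Y"
      by (rule key) (use A True g in \<open>fastforce\<close>)
    moreover have "min (measure p A) (measure p B) * (g / 2)\<^sup>2 \<le> measure p A * (g / 2)\<^sup>2"
      by (intro mult_right_mono) auto
    ultimately show ?thesis by (simp add: m_def)
  next
    case False
    have "measure p B * (g / 2)\<^sup>2 \<le> measure_pmf.variance p Y"
      by (rule key) (use B False g in \<open>fastforce\<close>)
    moreover have "min (measure p A) (measure p B) * (g / 2)\<^sup>2 \<le> measure p B * (g / 2)\<^sup>2"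
      by (intro mult_right_mono) auto
    ultimately show ?thesis by (simp add: m_def)
  qed
qed

lemma sq_sum_le: "(x + y)\<^sup>2 \<le> 2 * (x\<^sup>2 + y\<^sup>2 :: real)"
proof -
  have "0 \<le> (x - y)\<^sup>2" by simp
  thus ?thesis by (simp add: power2_eq_square algebra_simps)
qed

lemma ln_fact_le: "ln (fact n) \<le> real n * real n"
proof (cases "n = 0")
  case False
  hence n: "real n > 0" by simp
  have "ln (fact n) \<le> ln (real (n ^ n))"
    using fact_le_power[of n, where 'a = real] by (subst ln_le_cancel_iff) auto
  also have "\<dots> = real n * ln (real n)" by (simp add: ln_realpow n)
  also have "\<dots> \<le> real n * real n"
    using n ln_le_minus_one[OF n] by (intro mult_left_mono) auto
  finally show ?thesis .
qed simp

lemma abs_ln_pp: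
  assumes r: "r > 0"
  shows "\<bar>ln (pp r a)\<bar> \<le> (r + \<bar>ln r\<bar> + 2) * exp (real a)"
proof -
  have eq: "ln (pp r a) = real a * ln r - ln (fact a) - r"
    using r by (simp add: pp_def ln_mult ln_div ln_realpow)
  have f0: "ln (fact a :: real) \<ge> 0" by (rule ln_ge_zero) simp
  have e1: "1 \<le> exp (real a)" by simp
  have e2: "real a \<le> exp (real a)" using exp_ge_add_one_self[of "real a"] by linarith
  have e3: "real a * real a \<le> 2 * exp (real a)"
    using exp_lower_Taylor_quadratic[of "real a"] by (simp add: power2_eq_square)
  have "\<bar>ln (pp r a)\<bar> \<le> real a * \<bar>ln r\<bar> + ln (fact a) + r"
  proof -
    have u: "\<bar>real a * ln r\<bar> = real a * \<bar>ln r\<bar>" by (simp add: abs_mult)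
    have "\<bar>real a * ln r - ln (fact a) - r\<bar> \<le> \<bar>real a * ln r\<bar> + ln (fact a) + r"
      using f0 r by linarith
    thus ?thesis unfolding eq u .
  qed
  also have "\<dots> \<le> exp (real a) * \<bar>ln r\<bar> + 2 * exp (real a) + r * exp (real a)"
    using ln_fact_le[of a] e1 e2 e3 r
    by (intro add_mono mult_right_mono) (auto simp: mult_left_le_one_le)
  also have "\<dots> = (r + \<bar>ln r\<bar> + 2) * exp (real a)" by (simp add: algebra_simps)
  finally show ?thesis .
qed

lemma q_lower_pair:
  assumes t: "t > 0"
  shows "pmf (srw_law t) (int a - int b) \<ge> pp (t/2) a * pp (t/2) b"
proof -
  have "pp (t/2) a * pp (t/2) b = measure (PP (t/2)) {(a, b)}"
    using t by (simp add: measure_pmf_single pmf_PP)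
  also have "\<dots> \<le> measure (PP (t/2)) ((\<lambda>(a, b). int a - int b) -` {int a - int b})"
    by (intro measure_pmf.finite_measure_mono) auto
  also have "\<dots> = pmf (srw_law t) (int a - int b)"
    using t by (simp add: srw_pos pmf_map)
  finally show ?thesis .
qed

lemma pois_exp2_integrable:
  assumes r: "r > 0"
  shows "integrable (measure_pmf (poisson_pmf r)) (\<lambda>a. exp (2 * real a))"
proof (rule integrable_pmf_summ)
  have r': "exp 2 * r > 0" using r by simp
  have eq: "pmf (poisson_pmf r) n * exp (2 * real n) = pp (exp 2 * r) n * exp (exp 2 * r - r)" for n
  proof -
    have "exp (2 * real n) = exp 2 ^ n" by (simp add: exp_of_nat_mult[symmetric] mult.commute)
    thus ?thesis using r
      by (simp add: pp_def power_mult_distrib exp_diff exp_minus field_simps)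
  qed
  have "summable (\<lambda>n. pp (exp 2 * r) n * exp (exp 2 * r - r))"
    by (rule summable_mult2[OF pp_summable[OF r']])
  thus "Infinite_Set_Sum.abs_summable_on (\<lambda>n. pmf (poisson_pmf r) n * exp (2 * real n)) UNIV"
    unfolding eq abs_summable_on_nat_iff' using pp_nonneg[OF r'] by simp
qed

lemma srw_int2:
  assumes t: "t > 0"
  shows "integrable (measure_pmf (srw_law t)) (\<lambda>x. (ln (pmf (srw_law t) x))\<^sup>2)"
proof -
  define r where "r = t / 2"
  have r: "r > 0" using t by (simp add: r_def)
  define K where "K = r + \<bar>ln r\<bar> + 2"
  define F where "F = (\<lambda>x::nat\<times>nat. 2 * K\<^sup>2 * (exp (2 * real (fst x)) + exp (2 * real (snd x))))"
  have i1: "integrable (measure_pmf (PP r)) (\<lambda>x. exp (2 * real (fst x)))"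
  proof -
    have "integrable (map_pmf fst (PP r)) (\<lambda>a. exp (2 * real a))"
      using pois_exp2_integrable[OF r] by (simp add: map_fst_pair_pmf)
    thus ?thesis by (simp only: integrable_map_pmf_eq)
  qed
  have i2: "integrable (measure_pmf (PP r)) (\<lambda>x. exp (2 * real (snd x)))"
  proof -
    have "integrable (map_pmf snd (PP r)) (\<lambda>a. exp (2 * real a))"
      using pois_exp2_integrable[OF r] by (simp add: map_snd_pair_pmf)
    thus ?thesis by (simp only: integrable_map_pmf_eq)
  qed
  have iF: "integrable (measure_pmf (PP r)) F"
    unfolding F_def by (intro integrable_mult_right Bochner_Integration.integrable_add i1 i2)
  have bound: "(ln (pmf (srw_law t) (int a - int b)))\<^sup>2 \<le> F (a, b)" for a b
  proof -
    let ?q = "pmf (srw_law t) (int a - int b)"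
    have lo: "pp r a * pp r b \<le> ?q" using q_lower_pair[OF t] by (simp add: r_def)
    have pa: "pp r a * pp r b > 0" using pp_pos[OF r] by simp
    have q1: "?q \<le> 1" by (rule pmf_le_1)
    have l1: "ln ?q \<le> 0" using pa lo q1 by simp
    have l2: "ln (pp r a * pp r b) \<le> ln ?q" using pa lo by simp
    have "\<bar>ln ?q\<bar> \<le> \<bar>ln (pp r a * pp r b)\<bar>" using l1 l2 by simp
    also have "\<dots> = \<bar>ln (pp r a) + ln (pp r b)\<bar>" by (subst ln_mult) (use pp_pos[OF r, of a] pp_pos[OF r, of b] in auto)
    also have "\<dots> \<le> \<bar>ln (pp r a)\<bar> + \<bar>ln (pp r b)\<bar>" by (rule abs_triangle_ineq)
    also have "\<dots> \<le> K * exp (real a) + K * exp (real b)"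
      using abs_ln_pp[OF r, of a] abs_ln_pp[OF r, of b] by (simp add: K_def add_mono)
    finally have le: "\<bar>ln ?q\<bar> \<le> K * exp (real a) + K * exp (real b)" .
    have "(ln ?q)\<^sup>2 = \<bar>ln ?q\<bar>\<^sup>2" by simp
    also have "\<dots> \<le> (K * exp (real a) + K * exp (real b))\<^sup>2"
      by (rule power_mono[OF le]) simp
    also have "\<dots> \<le> 2 * ((K * exp (real a))\<^sup>2 + (K * exp (real b))\<^sup>2)"
      by (rule sq_sum_le)
    also have "\<dots> = F (a, b)"
      by (simp add: F_def power_mult_distrib algebra_simps exp_double[symmetric] power2_eq_square mult_exp_exp)
    finally show ?thesis .
  qed
  have "integrable (measure_pmf (PP r)) (\<lambda>x. (ln (pmf (srw_law t) (case x of (a, b) \<Rightarrow> int a - int b)))\<^sup>2)"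
  proof (rule Bochner_Integration.integrable_bound[OF iF])
    show "AE x in measure_pmf (PP r). norm ((ln (pmf (srw_law t) (case x of (a, b) \<Rightarrow> int a - int b)))\<^sup>2) \<le> norm (F x)"
    proof (rule AE_I2)
      fix x :: "nat \<times> nat"
      obtain a b where x: "x = (a, b)" by (cases x)
      have "F x \<ge> 0" unfolding F_def by simp
      thus "norm ((ln (pmf (srw_law t) (case x of (a, b) \<Rightarrow> int a - int b)))\<^sup>2) \<le> norm (F x)"
        using bound[of a b] by (simp add: x)
    qed
  qed simp
  thus ?thesis using t by (simp add: srw_pos r_def)
qed



lemma q0: "t > 0 \<Longrightarrow> pmf (srw_law t) 0 = ss (t/2) 0"
  using q_nat[of t 0] by simp

lemma q1: "t > 0 \<Longrightarrow> pmf (srw_law t) 1 = ss (t/2) 1"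
  using q_nat[of t 1] by simp

lemma small_case:
  assumes t: "0 < t" "t \<le> 1"
  shows "varent (srw_law t) \<ge> (1 / (8 * exp 1)) * V_rate t"
proof -
  define r where "r = t / 2"
  have r: "r > 0" "r \<le> 1/2" using t by (auto simp: r_def)
  have s0: "ss r 0 > 0" and s1: "ss r 1 > 0" and s2: "ss r 2 > 0" using ss_pos[OF r(1)] by auto
  have rec: "real (Suc 0) * ss r (Suc 0) = r * (ss r 0 - ss r (Suc (Suc 0)))" by (rule ss_rec[OF r(1)])
  have "r * ss r (Suc (Suc 0)) > 0" using r s2 by (simp add: numeral_2_eq_2)
  hence s1le: "ss r 1 \<le> r * ss r 0" using rec by (simp add: algebra_simps)
  have lo1: "ss r 1 \<ge> r * exp (- t)"
  proof -
    have "pp r 1 * pp r 0 \<le> pmf (srw_law t) (int 1 - int 0)" using q_lower_pair[OF t(1), of 1 0] by (simp only: r_def)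
    moreover have "pp r 1 * pp r 0 = r * exp (- t)"
      by (simp add: pp_def r_def mult_exp_exp)
    ultimately show ?thesis using q1[OF t(1)] by (simp add: r_def)
  qed
  have lo0: "ss r 0 \<ge> r * exp (- t)"
  proof -
    have "pp r 0 * pp r 0 \<le> pmf (srw_law t) (int 0 - int 0)" using q_lower_pair[OF t(1), of 0 0] by (simp only: r_def)
    moreover have "pp r 0 * pp r 0 = exp (- t)"
      by (simp add: pp_def r_def mult_exp_exp)
    ultimately have "exp (- t) \<le> ss r 0" using q0[OF t(1)] by (simp add: r_def)
    moreover have "r * exp (- t) \<le> exp (- t)" using r by simp
    ultimately show ?thesis by linarith
  qed
  define g where "g = ln (1 / r)"
  have g0: "g \<ge> 0" using r by (simp add: g_def)
  have gap: "ln (ss r 1) + g \<le> ln (ss r 0)"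
  proof -
    have "ln (ss r 1) + g = ln (ss r 1 / r)" using s1 r by (simp add: g_def ln_div)
    also have "\<dots> \<le> ln (ss r 0)"
    proof (subst ln_le_cancel_iff)
      show "ss r 1 / r \<le> ss r 0" using s1le r by (simp add: field_simps)
    qed (use s1 s0 r in auto)
    finally show ?thesis .
  qed
  have V: "varent (srw_law t) \<ge> min (measure (srw_law t) {0}) (measure (srw_law t) {1}) * (g / 2)\<^sup>2"
    unfolding varent_def
  proof (rule var_two_sets[OF srw_int2[OF t(1)] _ _ gap g0])
    show "\<And>x. x \<in> {0} \<Longrightarrow> ln (ss r 0) \<le> ln (pmf (srw_law t) x)" using q0[OF t(1)] by (simp add: r_def)
    show "\<And>x. x \<in> {1} \<Longrightarrow> ln (pmf (srw_law t) x) \<le> ln (ss r 1)" using q1[OF t(1)] by (simp add: r_def)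
  qed
  have mn: "min (measure (srw_law t) {0}) (measure (srw_law t) {1}) \<ge> r * exp (- t)"
    using lo0 lo1 q0[OF t(1)] q1[OF t(1)] by (simp add: measure_pmf_single r_def)
  have et: "exp (- t) \<ge> exp (- 1)" using t by simp
  have "(1 / (8 * exp 1)) * V_rate t \<le> (1 / (8 * exp 1)) * (t * (ln (2 / t))\<^sup>2)"
  proof -
    have a: "1 + 1 / sqrt t \<le> 2 / t"
    proof -
      define s where "s = sqrt t"
      have st: "s \<le> 1" "s > 0" using t by (auto simp: s_def)
      have ts: "t = s * s" using t by (simp add: s_def)
      have "s * s \<le> 1" using st by (simp add: mult_le_one)
      hence "s * s + s \<le> 2" using st by linarith
      moreover have "(1 + 1 / s) * (s * s) = s * s + s" using st by (simp add: field_simps)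
      ultimately have "(1 + 1 / s) * (s * s) \<le> 2" by simp
      hence "1 + 1 / s \<le> 2 / (s * s)" using st by (simp add: field_simps)
      moreover have "sqrt t = s" by (simp add: s_def)
      ultimately show ?thesis by (simp only: ts)
    qed
    have pos: "0 < 1 + 1 / sqrt t" using t by (simp add: add_pos_pos)
    have "ln (1 + 1 / sqrt t) \<le> ln (2 / t)" using a t pos by (subst ln_le_cancel_iff) auto
    moreover have "0 \<le> ln (1 + 1 / sqrt t)" using t by simp
    ultimately have "(ln (1 + 1 / sqrt t))\<^sup>2 \<le> (ln (2 / t))\<^sup>2" by (intro power_mono) auto
    hence "t * (ln (1 + 1 / sqrt t))\<^sup>2 \<le> t * (ln (2 / t))\<^sup>2" using t by (intro mult_left_mono) auto
    hence "(1 / (8 * exp 1)) * (t * (ln (1 + 1 / sqrt t))\<^sup>2) \<le> (1 / (8 * exp 1)) * (t * (ln (2 / t))\<^sup>2)"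
      by (rule mult_left_mono) auto
    thus ?thesis using t by (simp only: V_rate_def) simp
  qed
  also have "\<dots> = (t / 2 * exp (- 1)) * (g / 2)\<^sup>2"
    by (simp add: g_def r_def exp_minus power2_eq_square field_simps)
  also have "\<dots> \<le> (r * exp (- t)) * (g / 2)\<^sup>2"
    using et t by (intro mult_right_mono) (auto simp: r_def)
  also have "\<dots> \<le> min (measure (srw_law t) {0}) (measure (srw_law t) {1}) * (g / 2)\<^sup>2"
    using mn by (intro mult_right_mono) auto
  also have "\<dots> \<le> varent (srw_law t)" by (rule V)
  finally show ?thesis .
qed



lemma q_le_ss0:
  assumes t: "t > 0"
  shows "pmf (srw_law t) k \<le> ss (t/2) 0"
proof (cases "k \<ge> 0")
  case True
  hence "k = int (nat k)" by simp
  hence "pmf (srw_law t) k = ss (t/2) (nat k)" using q_nat[OF t, of "nat k"] by simp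
  thus ?thesis using ss_antimono[of "t/2" 0 "nat k"] t by simp
next
  case False
  hence "k = - int (nat (- k))" by simp
  hence "pmf (srw_law t) k = ss (t/2) (nat (- k))" using q_neg[OF t, of "nat (- k)"] by simp
  thus ?thesis using ss_antimono[of "t/2" 0 "nat (- k)"] t by simp
qed

lemma ss0_lower:
  assumes t: "t \<ge> 1" and n: "real n \<ge> sqrt t"
  shows "ss (t/2) 0 \<ge> 1 / (2 * (8 * real n + 1))"
proof -
  define r where "r = t / 2"
  have r: "r > 0" using t by (simp add: r_def)
  have t0: "t > 0" using t by simp
  have nn: "real n * real n \<ge> t"
  proof -
    have "sqrt t * sqrt t \<le> real n * real n" using n t by (intro mult_mono) auto
    thus ?thesis using t by simp
  qed
  have npos: "real n > 0" using n t by (smt (verit) real_sqrt_ge_one)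
  define J where "J = {a::nat. \<bar>real a - r\<bar> \<le> 2 * real n}"
  have c: "measure (poisson_pmf r) {a. 2 * real n < \<bar>real a - r\<bar>} \<le> r / (2 * real n)\<^sup>2"
    by (rule pois_cheb[OF r]) (use npos in simp)
  have "r / (2 * real n)\<^sup>2 \<le> 1 / 8"
    using nn npos by (simp add: r_def power2_eq_square field_simps)
  with c have c': "measure (poisson_pmf r) {a. 2 * real n < \<bar>real a - r\<bar>} \<le> 1 / 8" by linarith
  have "UNIV - J = {a. 2 * real n < \<bar>real a - r\<bar>}" by (auto simp: J_def)
  hence "measure (poisson_pmf r) (UNIV - J) \<le> 1 / 8" using c' by simp
  moreover have "measure (poisson_pmf r) (UNIV - J) = 1 - measure (poisson_pmf r) J"
    using measure_pmf.prob_compl[of J "poisson_pmf r"] by simp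
  ultimately have mJ: "measure (poisson_pmf r) J \<ge> 7 / 8" by simp
  have "measure (PP r) (J \<times> J) = measure (poisson_pmf r) J * measure (poisson_pmf r) J"
    by (rule measure_pmf_prob_product) auto
  also have "\<dots> \<ge> 7 / 8 * (7 / 8)" using mJ by (intro mult_mono) auto
  finally have mJJ: "measure (PP r) (J \<times> J) \<ge> 1 / 2" by simp
  define S where "S = {- (4 * int n) .. 4 * int n}"
  have sub: "J \<times> J \<subseteq> (\<lambda>(a, b). int a - int b) -` S"
  proof
    fix x assume "x \<in> J \<times> J"
    then obtain a b where x: "x = (a, b)" and a: "a \<in> J" and b: "b \<in> J" by auto
    have "\<bar>real a - real b\<bar> \<le> 4 * real n" using a b by (simp add: J_def)
    hence "real_of_int (- (4 * int n)) \<le> real_of_int (int a - int b)"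
          "real_of_int (int a - int b) \<le> real_of_int (4 * int n)" by auto
    hence "- (4 * int n) \<le> int a - int b" "int a - int b \<le> 4 * int n" by (simp only: of_int_le_iff)+
    thus "x \<in> (\<lambda>(a, b). int a - int b) -` S" by (simp add: x S_def)
  qed
  have "1 / 2 \<le> measure (PP r) ((\<lambda>(a, b). int a - int b) -` S)"
    using mJJ measure_pmf.finite_measure_mono[OF sub, of "PP r"] by simp
  also have "\<dots> = measure (srw_law t) S" using t0 by (simp add: srw_pos r_def)
  also have "\<dots> = sum (pmf (srw_law t)) S" by (simp add: measure_measure_pmf_finite S_def)
  also have "\<dots> \<le> sum (\<lambda>_. ss r 0) S" using q_le_ss0[OF t0] by (intro sum_mono) (simp add: r_def)
  also have "\<dots> = (8 * real n + 1) * ss r 0" by (simp add: S_def)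
  finally have "1 / 2 \<le> (8 * real n + 1) * ss r 0" .
  thus ?thesis using npos by (simp add: r_def field_simps)
qed



lemma large_case:
  assumes t: "t \<ge> 1"
  shows "varent (srw_law t) \<ge> exp (- 128) / 16 * (ln 3 / 2)\<^sup>2"
proof -
  define r where "r = t / 2"
  have t0: "t > 0" using t by simp
  have r: "r > 0" using t by (simp add: r_def)
  define n where "n = nat \<lceil>sqrt t\<rceil>"
  have st1: "sqrt t \<ge> 1" using t by simp
  have nge: "real n \<ge> sqrt t" unfolding n_def using st1
    by (metis le_of_int_ceiling of_int_0_le_iff of_nat_nat order_trans zero_le_one ceiling_mono ceiling_one)
  have nle: "real n \<le> 2 * sqrt t"
  proof -
    have "real n = real_of_int \<lceil>sqrt t\<rceil>" unfolding n_def using st1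
      by (metis of_nat_nat ceiling_mono ceiling_one order_trans zero_le_one)
    also have "\<dots> \<le> sqrt t + 1" by (rule of_int_ceiling_le_add_one)
    finally show ?thesis using st1 by linarith
  qed
  have npos: "real n \<ge> 1" using nge st1 by linarith
  have n1: "n \<ge> 1" using npos by simp
  have nn_lo: "real n * real n \<ge> t"
  proof -
    have "sqrt t * sqrt t \<le> real n * real n" using nge t by (intro mult_mono) auto
    thus ?thesis using t by simp
  qed
  have nn_hi: "real n * real n \<le> 4 * t"
  proof -
    have "real n * real n \<le> (2 * sqrt t) * (2 * sqrt t)" using nle npos t by (intro mult_mono) auto
    thus ?thesis using t by simp
  qed
  have s0: "ss r 0 \<ge> 1 / (2 * (8 * real n + 1))" using ss0_lower[OF t nge] by (simp add: r_def)
  have s0n: "(real n + 1) * ss r 0 \<ge> 1 / 16"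
  proof -
    have "(real n + 1) * (1 / (2 * (8 * real n + 1))) \<ge> 1 / 16" using npos by (simp add: field_simps)
    also have "(real n + 1) * (1 / (2 * (8 * real n + 1))) \<le> (real n + 1) * ss r 0"
      using s0 npos by (intro mult_left_mono) auto
    finally show ?thesis .
  qed
  have s0pos: "ss r 0 > 0" by (rule ss_pos[OF r])
  have lowk: "ss r k \<ge> ss r 0 * exp (- 128)" if k: "k \<le> 4 * n" for k
  proof -
    have "real k \<le> 4 * real n" using k by simp
    hence "real k * real k \<le> (4 * real n) * (4 * real n)" by (intro mult_mono) auto
    also have "\<dots> \<le> 16 * (4 * t)" using nn_hi by simp
    finally have kk: "real k * real k / r \<le> 128" using r by (simp add: r_def field_simps)
    have "exp (- 128) \<le> exp (- (real k * real k) / r)" using kk by simp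
    hence "ss r 0 * exp (- 128) \<le> ss r 0 * exp (- (real k * real k) / r)"
      using s0pos by (intro mult_left_mono) auto
    also have "\<dots> \<le> ss r k" by (rule ss_lower[OF r])
    finally show ?thesis .
  qed
  have gap3: "3 * ss r (3 * n) \<le> ss r n"
  proof -
    have g: "ss r (n + 2 * n) * (1 + real (Suc n) / r) ^ n \<le> ss r n" by (rule ss_gap[OF r])
    have "1 + real n * (real (Suc n) / r) \<le> (1 + real (Suc n) / r) ^ n"
    proof (rule Bernoulli_inequality)
      have "0 \<le> real (Suc n) / r" using r by simp
      thus "- 1 \<le> real (Suc n) / r" by linarith
    qed
    moreover have "real n * (real (Suc n) / r) \<ge> 2"
    proof -
      have "real n * real (Suc n) \<ge> real n * real n" by (intro mult_left_mono) auto
      hence "real n * real (Suc n) \<ge> t" using nn_lo by linarith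
      thus ?thesis using r t by (simp add: r_def field_simps)
    qed
    ultimately have "(1 + real (Suc n) / r) ^ n \<ge> 3" by linarith
    hence "ss r (3 * n) * 3 \<le> ss r (3 * n) * (1 + real (Suc n) / r) ^ n"
      using ss_pos[OF r, of "3 * n"] by (intro mult_left_mono) auto
    also have "\<dots> \<le> ss r n" using g by (simp add: mult.commute[of 2 n] add.commute)
    finally show ?thesis by simp
  qed
  define A where "A = int ` {0..n}"
  define B where "B = int ` {3 * n..4 * n}"
  have PA: "measure (srw_law t) A \<ge> exp (- 128) / 16"
  proof -
    have "measure (srw_law t) A = sum (pmf (srw_law t)) A" by (simp add: measure_measure_pmf_finite A_def)
    also have "\<dots> = sum (\<lambda>j. ss r j) {0..n}"
      unfolding A_def by (subst sum.reindex) (auto simp: q_nat[OF t0] r_def)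
    also have "\<dots> \<ge> real (card {0..n}) * (ss r 0 * exp (- 128))"
      by (rule sum_bounded_below) (use lowk in auto)
    finally have "measure (srw_law t) A \<ge> (real n + 1) * ss r 0 * exp (- 128)" by (simp add: mult_ac add.commute)
    moreover have "(real n + 1) * ss r 0 * exp (- 128) \<ge> 1 / 16 * exp (- 128)"
      using s0n by (intro mult_right_mono) auto
    ultimately show ?thesis by linarith
  qed
  have PB: "measure (srw_law t) B \<ge> exp (- 128) / 16"
  proof -
    have "measure (srw_law t) B = sum (pmf (srw_law t)) B" by (simp add: measure_measure_pmf_finite B_def)
    also have "\<dots> = sum (\<lambda>j. ss r j) {3 * n..4 * n}"
      unfolding B_def by (subst sum.reindex) (auto simp: q_nat[OF t0] r_def)
    also have "\<dots> \<ge> real (card {3 * n..4 * n}) * (ss r 0 * exp (- 128))"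
      by (rule sum_bounded_below) (use lowk in auto)
    finally have "measure (srw_law t) B \<ge> (real n + 1) * ss r 0 * exp (- 128)" by (simp add: mult_ac add.commute)
    moreover have "(real n + 1) * ss r 0 * exp (- 128) \<ge> 1 / 16 * exp (- 128)"
      using s0n by (intro mult_right_mono) auto
    ultimately show ?thesis by linarith
  qed
  have gap: "ln (ss r (3 * n)) + ln 3 \<le> ln (ss r n)"
  proof -
    have "ln (ss r (3 * n)) + ln 3 = ln (3 * ss r (3 * n))"
      using ss_pos[OF r, of "3 * n"] by (simp add: ln_mult)
    also have "\<dots> \<le> ln (ss r n)"
      using gap3 ss_pos[OF r, of "3 * n"] ss_pos[OF r, of n] by (subst ln_le_cancel_iff) auto
    finally show ?thesis .
  qed
  have V: "varent (srw_law t) \<ge> min (measure (srw_law t) A) (measure (srw_law t) B) * (ln 3 / 2)\<^sup>2"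
    unfolding varent_def
  proof (rule var_two_sets[OF srw_int2[OF t0] _ _ gap])
    fix x assume "x \<in> A"
    then obtain j where x: "x = int j" and j: "j \<le> n" by (auto simp: A_def)
    have "ss r n \<le> ss r j" by (rule ss_antimono[OF r j])
    thus "ln (ss r n) \<le> ln (pmf (srw_law t) x)"
      using ss_pos[OF r, of n] by (simp add: x q_nat[OF t0] r_def[symmetric])
  next
    fix x assume "x \<in> B"
    then obtain j where x: "x = int j" and j: "3 * n \<le> j" by (auto simp: B_def)
    have "ss r j \<le> ss r (3 * n)" by (rule ss_antimono[OF r j])
    thus "ln (pmf (srw_law t) x) \<le> ln (ss r (3 * n))"
      using ss_pos[OF r, of j] by (simp add: x q_nat[OF t0] r_def[symmetric])
  qed simp
  have "exp (- 128) / 16 * (ln 3 / 2)\<^sup>2 \<le> min (measure (srw_law t) A) (measure (srw_law t) B) * (ln 3 / 2)\<^sup>2"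
    using PA PB by (intro mult_right_mono) auto
  thus ?thesis using V by linarith
qed

lemma V_rate_le1: "t \<ge> 1 \<Longrightarrow> V_rate t \<le> 1"
proof -
  assume t: "t \<ge> 1"
  have sp: "sqrt t > 0" using t by simp
  have l0: "0 \<le> ln (1 + 1 / sqrt t)" using sp by simp
  have l1: "ln (1 + 1 / sqrt t) \<le> 1 / sqrt t" by (rule ln_add_one_self_le_self) (use sp in simp)
  have "(ln (1 + 1 / sqrt t))\<^sup>2 \<le> (1 / sqrt t)\<^sup>2" using l0 l1 by (intro power_mono) auto
  also have "\<dots> = 1 / t" using t by (simp add: power_divide)
  finally have "t * (ln (1 + 1 / sqrt t))\<^sup>2 \<le> t * (1 / t)" using t by (intro mult_left_mono) auto
  thus ?thesis using t by (simp add: V_rate_def)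
qed

lemma varent_nonneg: "varent p \<ge> 0"
  unfolding varent_def by (rule Bochner_Integration.integral_nonneg) simp

theorem lemma5:
  shows "\<exists>c::real. c > 0 \<and> (\<forall>t::real. t \<ge> 0 \<longrightarrow> varent (srw_law t) \<ge> c * V_rate t)"
proof -
  define c :: real where "c = min (1 / (8 * exp 1)) (exp (- 128) / 16 * (ln 3 / 2)\<^sup>2)"
  have cpos: "c > 0" by (simp add: c_def)
  have "varent (srw_law t) \<ge> c * V_rate t" if t: "t \<ge> 0" for t
  proof (cases "t = 0")
    case True
    thus ?thesis using varent_nonneg by (simp add: V_rate_def)
  next
    case False
    hence t0: "t > 0" using t by simp
    have Vnn: "V_rate t \<ge> 0" using t0 by (simp add: V_rate_def)
    show ?thesis
    proof (cases "t \<le> 1")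
      case True
      have "c * V_rate t \<le> (1 / (8 * exp 1)) * V_rate t"
        using Vnn by (intro mult_right_mono) (auto simp: c_def)
      also have "\<dots> \<le> varent (srw_law t)" by (rule small_case[OF t0 True])
      finally show ?thesis .
    next
      case False
      hence t1: "t \<ge> 1" by simp
      have "c * V_rate t \<le> c * 1" using V_rate_le1[OF t1] cpos by (intro mult_left_mono) auto
      also have "\<dots> \<le> exp (- 128) / 16 * (ln 3 / 2)\<^sup>2" by (simp add: c_def)
      also have "\<dots> \<le> varent (srw_law t)" by (rule large_case[OF t1])
      finally show ?thesis .
    qed
  qed
  thus ?thesis using cpos by blast
qed


end
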